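(* As $n\to\infty$, \[ 2\log s(n,2) \sim \log p(n,2) \sim \log m(n,2). \]
   Context: For integers $0\le r\le n$, $m(n,r)$ denotes the number of matroids of rank $r$ on the fixed ground set $[n]=\{1,\dots,n\}$, $p(n,r)$ the number of those that are paving, and $s(n,r)$ the number of those that are sparse paving. A matroid of rank $r$ is paving if every circuit has cardinality at least $r$; it is sparse paving if both it and its dual are paving (equivalently, every $r$-subset of the ground set is either a basis or a circuit-hyperplane). $\log$ denotes the logarithm to base $2$, and $f\sim g$ means $f/g\to 1$. *)

theory Defs
  imports Complex_Main "HOL-Library.Landau_Symbols"
begin

definition matroid_indep :: "'a set \<Rightarrow> 'a set set \<Rightarrow> bool" where
  "matroid_indep E I \<longleftrightarrow> finite E \<and> (\<forall>X\<in>I. X \<subseteq> E) \<and> {} \<in> I \<and>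
     (\<forall>X Y. X \<in> I \<and> Y \<subseteq> X \<longrightarrow> Y \<in> I) \<and>
     (\<forall>X Y. X \<in> I \<and> Y \<in> I \<and> card X < card Y \<longrightarrow> (\<exists>y\<in>Y - X. insert y X \<in> I))"

definition matroid_rank :: "'a set set \<Rightarrow> nat" where
  "matroid_rank I = Max (card ` I)"

definition matroid_basis :: "'a set set \<Rightarrow> 'a set \<Rightarrow> bool" where
  "matroid_basis I B \<longleftrightarrow> B \<in> I \<and> (\<forall>X\<in>I. \<not> B \<subset> X)"

definition matroid_circuit :: "'a set \<Rightarrow> 'a set set \<Rightarrow> 'a set \<Rightarrow> bool" where
  "matroid_circuit E I C \<longleftrightarrow> C \<subseteq> E \<and> C \<notin> I \<and> (\<forall>D. D \<subset> C \<longrightarrow> D \<in> I)"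

definition dual_indep :: "'a set \<Rightarrow> 'a set set \<Rightarrow> 'a set set" where
  "dual_indep E I = {X. X \<subseteq> E \<and> (\<exists>B. matroid_basis I B \<and> X \<inter> B = {})}"

definition paving :: "'a set \<Rightarrow> 'a set set \<Rightarrow> bool" where
  "paving E I \<longleftrightarrow> (\<forall>C. matroid_circuit E I C \<longrightarrow> card C \<ge> matroid_rank I)"

definition sparse_paving :: "'a set \<Rightarrow> 'a set set \<Rightarrow> bool" where
  "sparse_paving E I \<longleftrightarrow> paving E I \<and> paving E (dual_indep E I)"

definition mcount :: "nat \<Rightarrow> nat \<Rightarrow> nat" where
  "mcount n r = card {I. matroid_indep {1..n} I \<and> matroid_rank I = r}"

definition pcount :: "nat \<Rightarrow> nat \<Rightarrow> nat" where
  "pcount n r = card {I. matroid_indep {1..n} I \<and> matroid_rank I = r \<and> paving {1..n} I}"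

definition scount :: "nat \<Rightarrow> nat \<Rightarrow> nat" where
  "scount n r = card {I. matroid_indep {1..n} I \<and> matroid_rank I = r \<and> sparse_paving {1..n} I}"

end

theory Submission imports Defs "HOL-Library.FuncSet" "HOL-Combinatorics.Permutations" "HOL-Real_Asymp.Real_Asymp" begin

lemma mi_fin: "matroid_indep E I \<Longrightarrow> finite I"
  unfolding matroid_indep_def by (metis Pow_iff finite_Pow_iff rev_finite_subset subsetI)
lemma mi_sub: "matroid_indep E I \<Longrightarrow> X \<in> I \<Longrightarrow> X \<subseteq> E"
  unfolding matroid_indep_def by blast
lemma mi_finE: "matroid_indep E I \<Longrightarrow> finite E"
  unfolding matroid_indep_def by blast
lemma mi_finX: "matroid_indep E I \<Longrightarrow> X \<in> I \<Longrightarrow> finite X"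
  using mi_sub mi_finE finite_subset by metis
lemma mi_down: "matroid_indep E I \<Longrightarrow> X \<in> I \<Longrightarrow> Y \<subseteq> X \<Longrightarrow> Y \<in> I"
  unfolding matroid_indep_def by blast
lemma mi_empty: "matroid_indep E I \<Longrightarrow> {} \<in> I"
  unfolding matroid_indep_def by blast
lemma mi_aug: "matroid_indep E I \<Longrightarrow> X \<in> I \<Longrightarrow> Y \<in> I \<Longrightarrow> card X < card Y \<Longrightarrow> \<exists>y\<in>Y-X. insert y X \<in> I"
  unfolding matroid_indep_def by blast

lemma r2_le: "matroid_indep E I \<Longrightarrow> matroid_rank I = 2 \<Longrightarrow> X \<in> I \<Longrightarrow> card X \<le> 2"
  unfolding matroid_rank_def using mi_fin by (metis Max_ge finite_imageI image_eqI)
lemma r2_ex: "matroid_indep E I \<Longrightarrow> matroid_rank I = 2 \<Longrightarrow> \<exists>X\<in>I. card X = 2"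
proof -
  assume a: "matroid_indep E I" "matroid_rank I = 2"
  have "Max (card ` I) \<in> card ` I"
    using a(1) mi_fin mi_empty by (intro Max_in) auto
  thus ?thesis using a(2) unfolding matroid_rank_def by auto
qed
lemma r2_basis_of: "matroid_indep E I \<Longrightarrow> matroid_rank I = 2 \<Longrightarrow> X \<in> I \<Longrightarrow> card X = 2 \<Longrightarrow> matroid_basis I X"
  unfolding matroid_basis_def
  by (metis mi_finX psubset_card_mono r2_le not_less)
lemma r2_basis_card: "matroid_indep E I \<Longrightarrow> matroid_rank I = 2 \<Longrightarrow> matroid_basis I B \<Longrightarrow> card B = 2"
proof -
  assume a: "matroid_indep E I" "matroid_rank I = 2" "matroid_basis I B"
  hence B: "B \<in> I" "\<forall>X\<in>I. \<not> B \<subset> X" unfolding matroid_basis_def by auto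
  obtain X where X: "X \<in> I" "card X = 2" using r2_ex a by blast
  show ?thesis
  proof (rule ccontr)
    assume "card B \<noteq> 2"
    hence "card B < card X" using r2_le[OF a(1,2) B(1)] X by auto
    then obtain y where "y \<in> X - B" "insert y B \<in> I" using mi_aug[OF a(1) B(1) X(1)] by blast
    thus False using B(2) by blast
  qed
qed
lemma r2_trans: "matroid_indep E I \<Longrightarrow> {b} \<in> I \<Longrightarrow> {a,b} \<notin> I \<Longrightarrow> {b,c} \<notin> I \<Longrightarrow> a \<noteq> c \<Longrightarrow> a \<noteq> b \<Longrightarrow> b \<noteq> c \<Longrightarrow> {a,c} \<notin> I"
proof
  assume a: "matroid_indep E I" "{b} \<in> I" "{a,b} \<notin> I" "{b,c} \<notin> I" "a \<noteq> c" "a \<noteq> b" "b \<noteq> c" "{a,c} \<in> I"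
  have "card {b} < card {a,c}" using a by simp
  then obtain y where "y \<in> {a,c} - {b}" "insert y {b} \<in> I" using mi_aug[OF a(1,2,8)] by blast
  thus False using a by (auto simp: insert_commute)
qed

definition Pg :: "nat set \<Rightarrow> nat set set \<Rightarrow> nat \<Rightarrow> nat \<Rightarrow> bool" where
  "Pg E I i j \<longleftrightarrow> j \<in> E \<and> {j} \<in> I \<and> ({i,j} \<notin> I \<or> j = i)"
definition gc :: "nat set \<Rightarrow> nat set set \<Rightarrow> nat \<Rightarrow> nat" where
  "gc E I i = (if {i} \<in> I then (LEAST j. Pg E I i j) else 0)"

lemma gc_prop: "i \<in> E \<Longrightarrow> {i} \<in> I \<Longrightarrow> Pg E I i (gc E I i) \<and> gc E I i \<le> i"
proof -
  assume a: "i \<in> E" "{i} \<in> I"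
  have "Pg E I i i" using a unfolding Pg_def by auto
  thus ?thesis using a unfolding gc_def by (auto intro: LeastI Least_le)
qed

lemma gc_same: "matroid_indep E I \<Longrightarrow> i \<in> E \<Longrightarrow> j \<in> E \<Longrightarrow> {i} \<in> I \<Longrightarrow> {j} \<in> I \<Longrightarrow> {i,j} \<notin> I \<Longrightarrow> gc E I i = gc E I j"
proof -
  assume a: "matroid_indep E I" "i \<in> E" "j \<in> E" "{i} \<in> I" "{j} \<in> I" "{i,j} \<notin> I"
  have "Pg E I i = Pg E I j"
  proof (intro ext iffI)
    fix l assume l: "Pg E I i l"
    show "Pg E I j l"
    proof (cases "l = i")
      case True thus ?thesis using a l unfolding Pg_def by (auto simp: insert_commute)
    next
      case False
      hence il: "{i,l} \<notin> I" using l unfolding Pg_def by auto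
      show ?thesis
      proof (cases "l = j")
        case True thus ?thesis using l unfolding Pg_def by auto
      next
        case False
        have "i \<noteq> j" using a by auto
        hence "{j,l} \<notin> I" using r2_trans[OF a(1) a(4), of j l] a il False \<open>l \<noteq> i\<close> by (auto simp: insert_commute)
        thus ?thesis using l unfolding Pg_def by auto
      qed
    qed
  next
    fix l assume l: "Pg E I j l"
    show "Pg E I i l"
    proof (cases "l = j")
      case True thus ?thesis using a l unfolding Pg_def by (auto simp: insert_commute)
    next
      case False
      hence il: "{j,l} \<notin> I" using l unfolding Pg_def by auto
      show ?thesis
      proof (cases "l = i")
        case True thus ?thesis using l unfolding Pg_def by auto
      next
        case False
        have "i \<noteq> j" using a by auto
        hence "{i,l} \<notin> I" using r2_trans[OF a(1) a(5), of i l] a il False \<open>l \<noteq> j\<close> by (auto simp: insert_commute)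
        thus ?thesis using l unfolding Pg_def by auto
      qed
    qed
  qed
  thus ?thesis using a unfolding gc_def by simp
qed

lemma gc_diff: "matroid_indep E I \<Longrightarrow> {i,j} \<in> I \<Longrightarrow> i \<noteq> j \<Longrightarrow> gc E I i \<noteq> gc E I j"
proof
  assume a: "matroid_indep E I" "{i,j} \<in> I" "i \<noteq> j" "gc E I i = gc E I j"
  have si: "{i} \<in> I" "{j} \<in> I" using mi_down[OF a(1,2)] by auto
  have E: "i \<in> E" "j \<in> E" using mi_sub[OF a(1,2)] by auto
  define l where "l = gc E I i"
  have Pi: "Pg E I i l" and Pj: "Pg E I j l" using gc_prop[OF E(1) si(1)] gc_prop[OF E(2) si(2)] a(4) l_def by auto
  hence l: "{l} \<in> I" "{i,l} \<notin> I \<or> l = i" "{j,l} \<notin> I \<or> l = j" unfolding Pg_def by auto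
  show False
  proof (cases "l = i")
    case True thus ?thesis using l a by (auto simp: insert_commute)
  next
    case False
    show ?thesis
    proof (cases "l = j")
      case True thus ?thesis using l a False by (auto simp: insert_commute)
    next
      case False
      have "{i,j} \<notin> I" using r2_trans[OF a(1) l(1), of i j] l \<open>l \<noteq> i\<close> False a(3) by (auto simp: insert_commute)
      thus False using a by auto
    qed
  qed
qed

lemma gc_zero: "i \<in> E \<Longrightarrow> 0 \<notin> E \<Longrightarrow> gc E I i = 0 \<longleftrightarrow> {i} \<notin> I"
proof -
  assume a: "i \<in> E" "0 \<notin> E"
  show ?thesis
  proof (cases "{i} \<in> I")
    case True
    have "Pg E I i (gc E I i)" using gc_prop[OF a(1) True] by blast
    hence "gc E I i \<in> E" unfolding Pg_def by blast
    hence "gc E I i \<noteq> 0" using a(2) by metis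
    thus ?thesis using True by blast
  next
    case False thus ?thesis unfolding gc_def by simp
  qed
qed

lemma recon:
  assumes M: "matroid_indep E I" "matroid_rank I = 2" and z: "0 \<notin> E"
  shows "X \<in> I \<longleftrightarrow> X \<subseteq> E \<and> card X \<le> 2 \<and> (\<forall>x\<in>X. gc E I x \<noteq> 0) \<and> (\<forall>x\<in>X. \<forall>y\<in>X. x \<noteq> y \<longrightarrow> gc E I x \<noteq> gc E I y)"
proof
  assume X: "X \<in> I"
  have sub: "X \<subseteq> E" using mi_sub[OF M(1) X] .
  moreover have "card X \<le> 2" using r2_le[OF M X] .
  moreover have "\<forall>x\<in>X. gc E I x \<noteq> 0"
  proof
    fix x assume "x \<in> X"
    hence "{x} \<in> I" "x \<in> E" using mi_down[OF M(1) X] sub by auto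
    thus "gc E I x \<noteq> 0" using gc_zero[OF _ z] by blast
  qed
  moreover have "\<forall>x\<in>X. \<forall>y\<in>X. x \<noteq> y \<longrightarrow> gc E I x \<noteq> gc E I y"
  proof (intro ballI impI)
    fix x y assume xy: "x \<in> X" "y \<in> X" "x \<noteq> y"
    hence "{x,y} \<subseteq> X" by blast
    hence "{x,y} \<in> I" by (rule mi_down[OF M(1) X])
    thus "gc E I x \<noteq> gc E I y" using gc_diff[OF M(1)] xy(3) by blast
  qed
  ultimately show "X \<subseteq> E \<and> card X \<le> 2 \<and> (\<forall>x\<in>X. gc E I x \<noteq> 0) \<and> (\<forall>x\<in>X. \<forall>y\<in>X. x \<noteq> y \<longrightarrow> gc E I x \<noteq> gc E I y)"
    by blast
next
  assume X: "X \<subseteq> E \<and> card X \<le> 2 \<and> (\<forall>x\<in>X. gc E I x \<noteq> 0) \<and> (\<forall>x\<in>X. \<forall>y\<in>X. x \<noteq> y \<longrightarrow> gc E I x \<noteq> gc E I y)"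
  have fin: "finite X" using X mi_finE[OF M(1)] finite_subset by blast
  have nl: "\<And>x. x \<in> X \<Longrightarrow> {x} \<in> I" using X gc_zero[OF _ z] by blast
  have "card X \<le> 2" using X by blast
  hence "card X = 0 \<or> card X = 1 \<or> card X = 2" by arith
  thus "X \<in> I"
  proof (elim disjE)
    assume "card X = 0" thus ?thesis using fin mi_empty[OF M(1)] by simp
  next
    assume "card X = 1" thus ?thesis using nl by (metis card_1_singletonE insertI1)
  next
    assume "card X = 2"
    then obtain x y where xy: "X = {x,y}" "x \<noteq> y" by (auto simp: card_2_iff)
    show ?thesis
    proof (rule ccontr)
      assume "X \<notin> I"
      hence "gc E I x = gc E I y" using gc_same[OF M(1), of x y] xy X nl by auto
      thus False using X xy by auto
    qed
  qed
qed

lemma gc_inj: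
  assumes "matroid_indep E I1" "matroid_rank I1 = 2" "matroid_indep E I2" "matroid_rank I2 = 2" "0 \<notin> E"
    and "\<forall>x\<in>E. gc E I1 x = gc E I2 x"
  shows "I1 = I2"
proof (rule set_eqI)
  fix X show "X \<in> I1 \<longleftrightarrow> X \<in> I2"
  proof (cases "X \<subseteq> E")
    case True
    hence eq: "\<And>x. x \<in> X \<Longrightarrow> gc E I1 x = gc E I2 x" using assms(6) by blast
    show ?thesis unfolding recon[OF assms(1,2,5)] recon[OF assms(3,4,5)] by (simp add: eq)
  next
    case False thus ?thesis unfolding recon[OF assms(1,2,5)] recon[OF assms(3,4,5)] by simp
  qed
qed


lemma sp_noloop:
  assumes M: "matroid_indep E I" "matroid_rank I = 2" and P: "paving E I" and i: "i \<in> E"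
  shows "{i} \<in> I"
proof (rule ccontr)
  assume n: "{i} \<notin> I"
  have "\<forall>D. D \<subset> {i} \<longrightarrow> D \<in> I"
  proof (intro allI impI)
    fix D assume "D \<subset> {i}" hence "D = {}" by blast
    thus "D \<in> I" using mi_empty[OF M(1)] by simp
  qed
  hence "matroid_circuit E I {i}" unfolding matroid_circuit_def using n i by blast
  hence "card {i} \<ge> matroid_rank I" using P unfolding paving_def by blast
  thus False using M(2) by simp
qed

lemma min_dep: "finite A \<Longrightarrow> A \<notin> J \<Longrightarrow> \<exists>C\<subseteq>A. C \<notin> J \<and> (\<forall>D. D \<subset> C \<longrightarrow> D \<in> J)"
proof (induction A rule: finite_psubset_induct)
  case (psubset A)
  show ?case
  proof (cases "\<forall>D. D \<subset> A \<longrightarrow> D \<in> J")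
    case True thus ?thesis using psubset.prems by blast
  next
    case False then obtain D where D: "D \<subset> A" "D \<notin> J" by blast
    then obtain C where "C \<subseteq> D" "C \<notin> J" "\<forall>D'. D' \<subset> C \<longrightarrow> D' \<in> J" using psubset.IH by blast
    thus ?thesis using D(1) by blast
  qed
qed

lemma dual_fin: "matroid_indep E I \<Longrightarrow> finite (dual_indep E I)"
proof -
  assume "matroid_indep E I"
  hence "finite (Pow E)" using mi_finE by blast
  moreover have "dual_indep E I \<subseteq> Pow E" unfolding dual_indep_def by blast
  ultimately show ?thesis using finite_subset by blast
qed

lemma dual_rank_ge:
  assumes M: "matroid_indep E I" "matroid_rank I = 2"
  shows "matroid_rank (dual_indep E I) \<ge> card E - 2"
proof -
  obtain X where X: "X \<in> I" "card X = 2" using r2_ex[OF M] by blast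
  have B: "matroid_basis I X" using r2_basis_of[OF M X] .
  have XE: "X \<subseteq> E" using mi_sub[OF M(1) X(1)] .
  have "E - X \<in> dual_indep E I" unfolding dual_indep_def using B by blast
  moreover have "card (E - X) = card E - 2" using XE X(2) mi_finE[OF M(1)]
    by (simp add: card_Diff_subset finite_subset)
  ultimately have "card E - 2 \<in> card ` dual_indep E I" by (metis image_eqI)
  thus ?thesis unfolding matroid_rank_def using Max_ge[OF finite_imageI[OF dual_fin[OF M(1)]]] by blast
qed

lemma sp_notriple:
  assumes M: "matroid_indep E I" "matroid_rank I = 2" and D: "paving E (dual_indep E I)"
    and abc: "a \<in> E" "b \<in> E" "c \<in> E" "a \<noteq> b" "b \<noteq> c" "a \<noteq> c"
    and dep: "{a,b} \<notin> I" "{b,c} \<notin> I" "{a,c} \<notin> I"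
  shows False
proof -
  let ?A = "E - {a,b,c}"
  have nd: "?A \<notin> dual_indep E I"
  proof
    assume "?A \<in> dual_indep E I"
    then obtain B where B: "matroid_basis I B" "?A \<inter> B = {}" unfolding dual_indep_def by blast
    have cB: "card B = 2" using r2_basis_card[OF M B(1)] .
    have BI: "B \<in> I" using B(1) unfolding matroid_basis_def by blast
    have "B \<subseteq> E" using mi_sub[OF M(1) BI] .
    hence Bs: "B \<subseteq> {a,b,c}" using B(2) by blast
    obtain u v where uv: "B = {u,v}" "u \<noteq> v" using cB by (auto simp: card_2_iff)
    have "u \<in> {a,b,c}" "v \<in> {a,b,c}" using uv Bs by auto
    moreover have "{b,a} \<notin> I" "{c,b} \<notin> I" "{c,a} \<notin> I" using dep by (simp_all add: insert_commute)
    ultimately show False using uv BI dep by auto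
  qed
  have finA: "finite ?A" using mi_finE[OF M(1)] by blast
  obtain C where C: "C \<subseteq> ?A" "C \<notin> dual_indep E I" "\<forall>D. D \<subset> C \<longrightarrow> D \<in> dual_indep E I"
    using min_dep[OF finA nd] by blast
  have "matroid_circuit E (dual_indep E I) C" unfolding matroid_circuit_def using C by blast
  hence c1: "card C \<ge> matroid_rank (dual_indep E I)" using D unfolding paving_def by blast
  have c2: "card C \<le> card ?A" using card_mono[OF finA C(1)] .
  have "card {a,b,c} = 3" using abc by simp
  hence c3: "card ?A = card E - 3" using abc mi_finE[OF M(1)] by (simp add: card_Diff_subset)
  have c4: "card E \<ge> 3" using \<open>card {a,b,c} = 3\<close> abc mi_finE[OF M(1)]
    using card_mono[of E "{a,b,c}"] by simp
  show False using c1 c2 c3 c4 dual_rank_ge[OF M] by linarith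
qed

lemma mcount_le: "mcount n 2 \<le> (n+1)^n"
proof -
  let ?E = "{1..n}"
  let ?M = "{I. matroid_indep ?E I \<and> matroid_rank I = 2}"
  let ?f = "\<lambda>I. restrict (gc ?E I) ?E"
  have z: "(0::nat) \<notin> ?E" by simp
  have inj: "inj_on ?f ?M"
  proof (rule inj_onI)
    fix I1 I2 assume a: "I1 \<in> ?M" "I2 \<in> ?M" "?f I1 = ?f I2"
    have "\<forall>x\<in>?E. gc ?E I1 x = gc ?E I2 x"
    proof
      fix x assume "x \<in> ?E"
      thus "gc ?E I1 x = gc ?E I2 x" using fun_cong[OF a(3), of x] by simp
    qed
    thus "I1 = I2" using gc_inj[OF _ _ _ _ z] a(1,2) by blast
  qed
  have img: "?f ` ?M \<subseteq> ?E \<rightarrow>\<^sub>E {0..n}"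
  proof
    fix g assume "g \<in> ?f ` ?M"
    then obtain I where I: "I \<in> ?M" "g = ?f I" by blast
    have "\<forall>x\<in>?E. gc ?E I x \<le> n"
    proof
      fix x assume x: "x \<in> ?E"
      show "gc ?E I x \<le> n"
      proof (cases "{x} \<in> I")
        case True thus ?thesis using gc_prop[OF x True] x by auto
      next
        case False thus ?thesis unfolding gc_def by simp
      qed
    qed
    thus "g \<in> ?E \<rightarrow>\<^sub>E {0..n}" using I(2) by auto
  qed
  have "card ?M \<le> card (?E \<rightarrow>\<^sub>E {0..n})"
    by (rule card_inj_on_le[OF inj img]) (simp add: finite_PiE)
  also have "\<dots> = (n+1)^n" by (simp add: card_PiE)
  finally show ?thesis unfolding mcount_def .
qed


lemma fin_sub: "T \<subseteq> {a..b::nat} \<Longrightarrow> finite T"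
  using finite_subset by blast

definition Tset :: "nat set \<Rightarrow> nat set set \<Rightarrow> nat set" where
  "Tset E I = {i \<in> E. gc E I i \<noteq> i}"

lemma sp_facts:
  assumes M: "matroid_indep E I" "matroid_rank I = 2" and S: "sparse_paving E I"
  shows "\<And>i. i \<in> E \<Longrightarrow> {i} \<in> I"
    and "\<And>i. i \<in> E \<Longrightarrow> gc E I i \<in> E \<and> gc E I (gc E I i) = gc E I i"
    and "inj_on (gc E I) (Tset E I)"
    and "Tset E I \<inter> gc E I ` Tset E I = {}"
proof -
  have P: "paving E I" and D: "paving E (dual_indep E I)" using S unfolding sparse_paving_def by auto
  show nl: "\<And>i. i \<in> E \<Longrightarrow> {i} \<in> I" using sp_noloop[OF M P] .
  have pg: "\<And>i. i \<in> E \<Longrightarrow> Pg E I i (gc E I i)" using gc_prop nl by blast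
  show gi: "\<And>i. i \<in> E \<Longrightarrow> gc E I i \<in> E \<and> gc E I (gc E I i) = gc E I i"
  proof
    fix i assume i: "i \<in> E"
    show g: "gc E I i \<in> E" using pg[OF i] unfolding Pg_def by blast
    show "gc E I (gc E I i) = gc E I i"
    proof (cases "gc E I i = i")
      case True thus ?thesis by simp
    next
      case False
      hence "{i, gc E I i} \<notin> I" using pg[OF i] unfolding Pg_def by blast
      thus ?thesis using gc_same[OF M(1) i g nl[OF i] nl[OF g]] by simp
    qed
  qed
  show "inj_on (gc E I) (Tset E I)"
  proof (rule inj_onI, rule ccontr)
    fix i j assume a: "i \<in> Tset E I" "j \<in> Tset E I" "gc E I i = gc E I j" "i \<noteq> j"
    define l where "l = gc E I i"
    have i: "i \<in> E" "l \<noteq> i" and j: "j \<in> E" "l \<noteq> j" using a unfolding Tset_def l_def by auto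
    have l: "l \<in> E" using gi[OF i(1)] l_def by simp
    have il: "{i,l} \<notin> I" using pg[OF i(1)] i(2) unfolding Pg_def l_def by blast
    have jl: "{j,l} \<notin> I" using pg[OF j(1)] j(2) a(3) unfolding Pg_def l_def by auto
    hence lj: "{l,j} \<notin> I" by (simp add: insert_commute)
    have ij: "{i,j} \<notin> I" using r2_trans[OF M(1) nl[OF l] il lj a(4)] i(2) j(2) by auto
    show False using sp_notriple[OF M D i(1) l j(1) _ _ a(4) il lj ij] i(2) j(2) by auto
  qed
  show "Tset E I \<inter> gc E I ` Tset E I = {}"
  proof (rule ccontr)
    assume "Tset E I \<inter> gc E I ` Tset E I \<noteq> {}"
    then obtain i where i: "i \<in> Tset E I" "gc E I i \<in> Tset E I" by blast
    hence "i \<in> E" unfolding Tset_def by blast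
    thus False using i(2) gi unfolding Tset_def by auto
  qed
qed

lemma Tset_card:
  assumes M: "matroid_indep E I" "matroid_rank I = 2" and S: "sparse_paving E I"
  shows "2 * card (Tset E I) \<le> card E"
proof -
  note F = sp_facts[OF M S]
  have fE: "finite E" using mi_finE[OF M(1)] .
  have TE: "Tset E I \<subseteq> E" unfolding Tset_def by blast
  have gE: "gc E I ` Tset E I \<subseteq> E" using F(2) TE by blast
  have fT: "finite (Tset E I)" using fE TE finite_subset by blast
  have "card (Tset E I \<union> gc E I ` Tset E I) = card (Tset E I) + card (gc E I ` Tset E I)"
    using F(4) fT by (simp add: card_Un_disjoint)
  also have "card (gc E I ` Tset E I) = card (Tset E I)" using card_image[OF F(3)] .
  finally have "card (Tset E I \<union> gc E I ` Tset E I) = 2 * card (Tset E I)" by simp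
  moreover have "card (Tset E I \<union> gc E I ` Tset E I) \<le> card E" using TE gE fE by (intro card_mono) auto
  ultimately show ?thesis by simp
qed

lemma scount_le: "n \<ge> 1 \<Longrightarrow> scount n 2 \<le> 2^n * n^(n div 2)"
proof -
  assume n: "n \<ge> 1"
  let ?E = "{1..n}"
  let ?S = "{I. matroid_indep ?E I \<and> matroid_rank I = 2 \<and> sparse_paving ?E I}"
  let ?f = "\<lambda>I. (Tset ?E I, restrict (gc ?E I) (Tset ?E I))"
  let ?A = "{T. T \<subseteq> ?E \<and> 2 * card T \<le> n}"
  let ?B = "SIGMA T:?A. (T \<rightarrow>\<^sub>E ?E)"
  have z: "(0::nat) \<notin> ?E" by simp
  have inj: "inj_on ?f ?S"
  proof (rule inj_onI)
    fix I1 I2 assume a: "I1 \<in> ?S" "I2 \<in> ?S" "?f I1 = ?f I2"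
    have T: "Tset ?E I1 = Tset ?E I2" and R: "restrict (gc ?E I1) (Tset ?E I1) = restrict (gc ?E I2) (Tset ?E I1)"
      using a(3) by auto
    have "\<forall>x\<in>?E. gc ?E I1 x = gc ?E I2 x"
    proof
      fix x assume x: "x \<in> ?E"
      show "gc ?E I1 x = gc ?E I2 x"
      proof (cases "x \<in> Tset ?E I1")
        case True thus ?thesis using fun_cong[OF R, of x] by simp
      next
        case False
        hence "x \<notin> Tset ?E I2" using T by simp
        thus ?thesis using False x unfolding Tset_def by simp
      qed
    qed
    thus "I1 = I2" using gc_inj[OF _ _ _ _ z] a(1,2) by blast
  qed
  have img: "?f ` ?S \<subseteq> ?B"
  proof
    fix p assume "p \<in> ?f ` ?S"
    then obtain I where I: "I \<in> ?S" "p = ?f I" by blast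
    have M: "matroid_indep ?E I" "matroid_rank I = 2" "sparse_paving ?E I" using I(1) by auto
    have "Tset ?E I \<in> ?A" using Tset_card[OF M] unfolding Tset_def by auto
    moreover have "restrict (gc ?E I) (Tset ?E I) \<in> Tset ?E I \<rightarrow>\<^sub>E ?E"
      using sp_facts(2)[OF M] unfolding Tset_def by auto
    ultimately show "p \<in> ?B" using I(2) by blast
  qed
  have finA: "finite ?A" by (rule finite_subset[of _ "Pow ?E"]) auto
  have finB: "finite ?B" using finA by (intro finite_SigmaI finite_PiE) (auto intro: fin_sub)
  have "card ?S \<le> card ?B" by (rule card_inj_on_le[OF inj img finB])
  also have "card ?B = (\<Sum>T\<in>?A. card (T \<rightarrow>\<^sub>E ?E))"
    using finA by (intro card_SigmaI) (auto intro: finite_PiE fin_sub)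
  also have "\<dots> \<le> (\<Sum>T\<in>?A. n^(n div 2))"
  proof (rule sum_mono)
    fix T assume T: "T \<in> ?A"
    hence fT: "finite T" using finite_subset[of T ?E] by auto
    have "card T \<le> n div 2" using T by auto
    hence "n ^ card T \<le> n^(n div 2)" using n by (intro power_increasing) auto
    thus "card (T \<rightarrow>\<^sub>E ?E) \<le> n^(n div 2)" using fT by (simp add: card_PiE)
  qed
  also have "\<dots> = card ?A * n^(n div 2)" by simp
  also have "\<dots> \<le> 2^n * n^(n div 2)"
  proof -
    have "card ?A \<le> card (Pow ?E)" by (intro card_mono) auto
    thus ?thesis by (simp add: card_Pow)
  qed
  finally show ?thesis unfolding scount_def .
qed


definition IF :: "nat set \<Rightarrow> (nat \<Rightarrow> nat) \<Rightarrow> nat set set" where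
  "IF E f = {X. X \<subseteq> E \<and> card X \<le> 2 \<and> inj_on f X}"

lemma inj_small: "finite C \<Longrightarrow> card C \<le> 1 \<Longrightarrow> inj_on f C"
  using card_le_Suc0_iff_eq[of C] unfolding inj_on_def by auto

lemma IF_mi: "finite E \<Longrightarrow> matroid_indep E (IF E f)"
  unfolding matroid_indep_def
proof (intro conjI allI impI ballI)
  assume fE: "finite E"
  show "finite E" by fact
  show "\<And>X. X \<in> IF E f \<Longrightarrow> X \<subseteq> E" unfolding IF_def by blast
  show "{} \<in> IF E f" unfolding IF_def by simp
  fix X Y
  {
    assume a: "X \<in> IF E f \<and> Y \<subseteq> X"
    hence "finite X" using fE unfolding IF_def by (auto intro: finite_subset)
    hence "card Y \<le> card X" using a card_mono by blast
    thus "Y \<in> IF E f" using a inj_on_subset unfolding IF_def by fastforce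
  }
  assume a: "X \<in> IF E f \<and> Y \<in> IF E f \<and> card X < card Y"
  hence X: "X \<subseteq> E" "card X \<le> 2" "inj_on f X" and Y: "Y \<subseteq> E" "card Y \<le> 2" "inj_on f Y"
    and c: "card X < card Y" unfolding IF_def by auto
  have fX: "finite X" and fY: "finite Y" using X Y fE finite_subset by auto
  have "card X = 0 \<or> card X = 1" using c Y(2) by arith
  thus "\<exists>y\<in>Y - X. insert y X \<in> IF E f"
  proof
    assume "card X = 0"
    hence X0: "X = {}" using fX by simp
    obtain y where "y \<in> Y" using c X0 by fastforce
    thus ?thesis using X0 Y unfolding IF_def by auto
  next
    assume c1: "card X = 1"
    then obtain x where x: "X = {x}" using card_1_singletonE by blast
    have "card Y = 2" using c c1 Y(2) by arith
    then obtain y1 y2 where yy: "Y = {y1,y2}" "y1 \<noteq> y2" by (auto simp: card_2_iff)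
    have "f y1 \<noteq> f y2" using Y(3) yy unfolding inj_on_def by auto
    hence "\<exists>y\<in>Y. f y \<noteq> f x" using yy by (cases "f y1 = f x") auto
    then obtain y where y: "y \<in> Y" "f y \<noteq> f x" by blast
    hence "y \<noteq> x" by auto
    moreover have "insert y X \<in> IF E f" unfolding IF_def using x y Y(1) X(1) \<open>y \<noteq> x\<close> by auto
    ultimately show ?thesis using x y by auto
  qed
qed

lemma IF_rank: "finite E \<Longrightarrow> a \<in> E \<Longrightarrow> b \<in> E \<Longrightarrow> f a \<noteq> f b \<Longrightarrow> matroid_rank (IF E f) = 2"
proof -
  assume a: "finite E" "a \<in> E" "b \<in> E" "f a \<noteq> f b"
  have fin: "finite (IF E f)" using mi_fin[OF IF_mi[OF a(1)]] .
  have ab: "a \<noteq> b" using a(4) by blast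
  have "{a,b} \<in> IF E f" using a ab unfolding IF_def by auto
  moreover have "card {a,b} = 2" using ab by auto
  ultimately have "2 \<in> card ` IF E f" by (metis image_eqI)
  moreover have "\<And>y. y \<in> card ` IF E f \<Longrightarrow> y \<le> 2" unfolding IF_def by auto
  ultimately show ?thesis unfolding matroid_rank_def using fin by (intro Max_eqI) auto
qed

lemma IF_paving: "finite E \<Longrightarrow> a \<in> E \<Longrightarrow> b \<in> E \<Longrightarrow> f a \<noteq> f b \<Longrightarrow> paving E (IF E f)"
  unfolding paving_def
proof (intro allI impI)
  fix C assume a: "finite E" "a \<in> E" "b \<in> E" "f a \<noteq> f b" and C: "matroid_circuit E (IF E f) C"
  have CE: "C \<subseteq> E" and Cn: "C \<notin> IF E f" using C unfolding matroid_circuit_def by auto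
  have fC: "finite C" using CE a(1) finite_subset by blast
  have "\<not> card C \<le> 1"
  proof
    assume "card C \<le> 1"
    hence "C \<in> IF E f" using inj_small[OF fC] CE unfolding IF_def by auto
    thus False using Cn by blast
  qed
  thus "matroid_rank (IF E f) \<le> card C" using IF_rank[OF a] by simp
qed

lemma three_elems: "3 \<le> card S \<Longrightarrow> \<exists>x y z. x \<in> S \<and> y \<in> S \<and> z \<in> S \<and> x \<noteq> y \<and> y \<noteq> z \<and> x \<noteq> z"
proof -
  assume "3 \<le> card S"
  then obtain a B where aB: "S = insert a B" "a \<notin> B" "2 \<le> card B" "finite B"
    using card_le_Suc_iff[of 2 S] by auto
  then obtain b B' where bB: "B = insert b B'" "b \<notin> B'" "1 \<le> card B'" "finite B'"
    using card_le_Suc_iff[of 1 B] by auto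
  then obtain c where "c \<in> B'" by fastforce
  thus ?thesis using aB bB by (intro exI[of _ a] exI[of _ b] exI[of _ c]) auto
qed

lemma IF_dual_paving:
  assumes fE: "finite E" and ab: "a \<in> E" "b \<in> E" "f a \<noteq> f b"
    and nt: "\<And>x y z. x \<in> E \<Longrightarrow> y \<in> E \<Longrightarrow> z \<in> E \<Longrightarrow> x \<noteq> y \<Longrightarrow> y \<noteq> z \<Longrightarrow> x \<noteq> z \<Longrightarrow> f x = f y \<Longrightarrow> f y = f z \<Longrightarrow> False"
  shows "paving E (dual_indep E (IF E f))"
  unfolding paving_def
proof (intro allI impI)
  let ?I = "IF E f"
  have M: "matroid_indep E ?I" "matroid_rank ?I = 2" using IF_mi[OF fE] IF_rank[OF fE ab] by auto
  have pair: "\<And>u v. u \<in> E \<Longrightarrow> v \<in> E \<Longrightarrow> f u \<noteq> f v \<Longrightarrow> matroid_basis ?I {u,v}"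
  proof -
    fix u v assume uv: "u \<in> E" "v \<in> E" "f u \<noteq> f v"
    hence "u \<noteq> v" by blast
    hence "{u,v} \<in> ?I" "card {u,v} = 2" using uv unfolding IF_def by auto
    thus "matroid_basis ?I {u,v}" using r2_basis_of[OF M] by blast
  qed
  have rk: "matroid_rank (dual_indep E ?I) \<le> card E - 2"
    unfolding matroid_rank_def
  proof (rule Max.boundedI)
    show "finite (card ` dual_indep E ?I)" using dual_fin[OF M(1)] by blast
    have "{} \<in> dual_indep E ?I" unfolding dual_indep_def using pair[OF ab] by blast
    thus "card ` dual_indep E ?I \<noteq> {}" by blast
    fix m assume "m \<in> card ` dual_indep E ?I"
    then obtain X B where X: "m = card X" "X \<subseteq> E" "matroid_basis ?I B" "X \<inter> B = {}"
      unfolding dual_indep_def by blast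
    have cB: "card B = 2" using r2_basis_card[OF M X(3)] .
    have BE: "B \<subseteq> E" using X(3) mi_sub[OF M(1)] unfolding matroid_basis_def by blast
    have "X \<subseteq> E - B" using X by blast
    hence "card X \<le> card (E - B)" using fE by (intro card_mono) auto
    also have "\<dots> = card E - 2" using BE cB fE by (simp add: card_Diff_subset finite_subset)
    finally show "m \<le> card E - 2" using X(1) by simp
  qed
  fix C assume C: "matroid_circuit E (dual_indep E ?I) C"
  hence CE: "C \<subseteq> E" and Cn: "C \<notin> dual_indep E ?I" unfolding matroid_circuit_def by auto
  have "card (E - C) \<le> 2"
  proof (rule ccontr)
    assume "\<not> card (E - C) \<le> 2"
    then obtain x y z where xyz: "x \<in> E - C" "y \<in> E - C" "z \<in> E - C" "x \<noteq> y" "y \<noteq> z" "x \<noteq> z"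
      using three_elems[of "E - C"] by auto
    have "\<exists>u v. u \<in> E - C \<and> v \<in> E - C \<and> f u \<noteq> f v"
    proof (rule ccontr)
      assume "\<not> (\<exists>u v. u \<in> E - C \<and> v \<in> E - C \<and> f u \<noteq> f v)"
      hence "f x = f y" "f y = f z" using xyz by auto
      thus False using nt[of x y z] xyz by auto
    qed
    then obtain u v where uv: "u \<in> E - C" "v \<in> E - C" "f u \<noteq> f v" by blast
    have "matroid_basis ?I {u,v}" using pair uv by auto
    moreover have "C \<inter> {u,v} = {}" using uv by auto
    ultimately have "C \<in> dual_indep E ?I" unfolding dual_indep_def using CE by blast
    thus False using Cn by blast
  qed
  moreover have "card (E - C) = card E - card C" using CE fE by (simp add: card_Diff_subset finite_subset)
  moreover have "card C \<le> card E" using CE fE card_mono by blast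
  ultimately show "matroid_rank (dual_indep E ?I) \<le> card C" using rk by linarith
qed

lemma pset_fin: "finite {I. matroid_indep {1..(n::nat)} I \<and> P I}"
proof (rule finite_subset[of _ "Pow (Pow {1..n})"])
  show "{I. matroid_indep {1..n} I \<and> P I} \<subseteq> Pow (Pow {1..n})"
    using mi_sub by blast
qed simp


lemma pcount_ge:
  assumes k: "2 \<le> k" "k \<le> n"
  shows "k^(n-k) \<le> pcount n 2"
proof -
  let ?E = "{1..n}"
  let ?F = "{Suc k..n} \<rightarrow>\<^sub>E {1..k}"
  let ?ext = "\<lambda>f i. if k < i then f i else (i::nat)"
  let ?Phi = "\<lambda>f. IF ?E (?ext f)"
  let ?P = "{I. matroid_indep ?E I \<and> matroid_rank I = 2 \<and> paving ?E I}"
  have inj: "inj_on ?Phi ?F"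
  proof (rule inj_onI, rule ccontr)
    fix f g assume a: "f \<in> ?F" "g \<in> ?F" "?Phi f = ?Phi g" "f \<noteq> g"
    obtain i where i: "i \<in> {Suc k..n}" "f i \<noteq> g i" using PiE_ext[OF a(1,2)] a(4) by blast
    have fi: "f i \<in> {1..k}" using a(1) i(1) by auto
    have ne: "i \<noteq> f i" using i(1) fi by auto
    let ?X = "{i, f i}"
    have XE: "?X \<subseteq> ?E" using i(1) fi k by auto
    have c: "card ?X = 2" using ne by simp
    have "?X \<in> ?Phi g"
      unfolding IF_def using XE c i fi ne by auto
    moreover have "?X \<notin> ?Phi f"
      unfolding IF_def using i fi ne by auto
    ultimately show False using a(3) by simp
  qed
  have img: "?Phi ` ?F \<subseteq> ?P"
  proof
    fix I assume "I \<in> ?Phi ` ?F"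
    then obtain f where f: "I = ?Phi f" by blast
    have e: "1 \<in> ?E" "2 \<in> ?E" "?ext f 1 \<noteq> ?ext f 2" using k by auto
    show "I \<in> ?P" using IF_mi[of ?E] IF_rank[OF _ e] IF_paving[OF _ e] f by auto
  qed
  have c1: "card ?F = k^(n-k)" by (simp add: card_PiE)
  have "k^(n-k) = card (?Phi ` ?F)" using card_image[OF inj] c1 by simp
  also have "\<dots> \<le> card ?P" using img pset_fin by (intro card_mono) auto
  finally show ?thesis unfolding pcount_def .
qed

lemma scount_ge:
  assumes k: "2 \<le> k" "2 * k \<le> n"
  shows "fact k \<le> scount n 2"
proof -
  let ?E = "{1..n}"
  let ?F = "{p. p permutes {1..k}}"
  let ?ext = "\<lambda>p i. if k < i \<and> i \<le> 2 * k then p (i - k) else (i::nat)"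
  let ?Phi = "\<lambda>p. IF ?E (?ext p)"
  let ?S = "{I. matroid_indep ?E I \<and> matroid_rank I = 2 \<and> sparse_paving ?E I}"
  have inj: "inj_on ?Phi ?F"
  proof (rule inj_onI, rule ccontr)
    fix p q assume a: "p \<in> ?F" "q \<in> ?F" "?Phi p = ?Phi q" "p \<noteq> q"
    obtain j where j0: "p j \<noteq> q j" using a(4) by blast
    have pp: "p permutes {1..k}" "q permutes {1..k}" using a(1,2) by auto
    have j: "j \<in> {1..k}"
    proof (rule ccontr)
      assume nj: "j \<notin> {1..k}"
      have "p j = j" "q j = j" using permutes_not_in[OF pp(1) nj] permutes_not_in[OF pp(2) nj] by auto
      thus False using j0 by simp
    qed
    have pj: "p j \<in> {1..k}" using permutes_in_image[of p "{1..k}" j] a(1) j by auto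
    have qj: "q j \<in> {1..k}" using permutes_in_image[of q "{1..k}" j] a(2) j by auto
    define i where "i = j + k"
    have ne: "i \<noteq> p j" using pj i_def j by auto
    let ?X = "{i, p j}"
    have XE: "?X \<subseteq> ?E" using i_def j pj k by auto
    have c: "card ?X = 2" using ne by simp
    define eq where "eq = ?ext q"
    define ep where "ep = ?ext p"
    have v: "eq i = q j" "eq (p j) = p j" "ep i = p j" "ep (p j) = p j" using i_def j pj unfolding eq_def ep_def by auto
    have "inj_on eq ?X" using v j0 unfolding inj_on_def by auto
    hence "?X \<in> IF ?E eq" unfolding IF_def using XE c by auto
    moreover have "\<not> inj_on ep ?X" using v ne unfolding inj_on_def by auto
    hence "?X \<notin> IF ?E ep" unfolding IF_def by auto
    moreover have "IF ?E ep = IF ?E eq" using a(3) unfolding ep_def eq_def .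
    ultimately show False by simp
  qed
  have img: "?Phi ` ?F \<subseteq> ?S"
  proof
    fix I assume "I \<in> ?Phi ` ?F"
    then obtain p where p: "I = ?Phi p" "p permutes {1..k}" by blast
    have e: "1 \<in> ?E" "2 \<in> ?E" "?ext p 1 \<noteq> ?ext p 2" using k by auto
    have injp: "inj p" using permutes_inj[OF p(2)] .
    have two: "\<And>u v. u \<noteq> v \<Longrightarrow> ?ext p u = ?ext p v \<Longrightarrow> (k < u \<and> u \<le> 2*k) \<noteq> (k < v \<and> v \<le> 2*k)"
    proof -
      fix u v assume uv: "u \<noteq> v" "?ext p u = ?ext p v"
      show "(k < u \<and> u \<le> 2*k) \<noteq> (k < v \<and> v \<le> 2*k)"
      proof
        assume eq: "(k < u \<and> u \<le> 2*k) = (k < v \<and> v \<le> 2*k)"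
        show False
        proof (cases "k < u \<and> u \<le> 2*k")
          case True
          hence "p (u - k) = p (v - k)" "k < v" using uv eq by auto
          hence "u - k = v - k" using injp unfolding inj_def by blast
          thus False using True \<open>k < v\<close> uv(1) by arith
        next
          case False thus False using uv eq by auto
        qed
      qed
    qed
    have nt: "\<And>x y z. x \<in> ?E \<Longrightarrow> y \<in> ?E \<Longrightarrow> z \<in> ?E \<Longrightarrow> x \<noteq> y \<Longrightarrow> y \<noteq> z \<Longrightarrow> x \<noteq> z \<Longrightarrow> ?ext p x = ?ext p y \<Longrightarrow> ?ext p y = ?ext p z \<Longrightarrow> False"
    proof -
      fix x y z assume a: "x \<noteq> y" "y \<noteq> z" "x \<noteq> z" "?ext p x = ?ext p y" "?ext p y = ?ext p z"
      have "(k < x \<and> x \<le> 2*k) \<noteq> (k < y \<and> y \<le> 2*k)" using two[OF a(1) a(4)] .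
      moreover have "(k < y \<and> y \<le> 2*k) \<noteq> (k < z \<and> z \<le> 2*k)" using two[OF a(2) a(5)] .
      moreover have "(k < x \<and> x \<le> 2*k) \<noteq> (k < z \<and> z \<le> 2*k)" using two[OF a(3)] a(4,5) by simp
      ultimately show False by blast
    qed
    have "sparse_paving ?E I" unfolding sparse_paving_def
      using IF_paving[OF _ e] IF_dual_paving[OF _ e nt] p(1) by auto
    thus "I \<in> ?S" using IF_mi[of ?E] IF_rank[OF _ e] p(1) by auto
  qed
  have c1: "card ?F = fact k" using card_permutations[of "{1..k}" k] by simp
  have "fact k = card (?Phi ` ?F)" using card_image[OF inj] c1 by simp
  also have "\<dots> \<le> card ?S" using img pset_fin by (intro card_mono) auto
  finally show ?thesis unfolding scount_def .
qed


lemma fact_exp: "real k ^ k / fact k \<le> exp (real k)"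
proof -
  have "sum (\<lambda>n. inverse (fact n) * real k ^ n) {k} \<le> suminf (\<lambda>n. inverse (fact n) * real k ^ n)"
    by (rule sum_le_suminf[OF summable_exp]) auto
  thus ?thesis by (simp add: exp_def divide_inverse ac_simps)
qed

lemma ln_fact_ge: "k \<ge> 1 \<Longrightarrow> real k * ln (real k) - real k \<le> ln (fact k)"
proof -
  assume k: "k \<ge> 1"
  have pos: "(0::real) < real k ^ k" using k by simp
  have "real k ^ k / exp (real k) \<le> fact k"
    using fact_exp[of k] by (simp add: field_simps)
  hence "ln (real k ^ k / exp (real k)) \<le> ln (fact k)"
    using pos by (subst ln_le_cancel_iff) auto
  moreover have "ln (real k ^ k / exp (real k)) = real k * ln (real k) - real k"
    using pos k by (simp add: ln_div ln_realpow)
  ultimately show ?thesis by simp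
qed

lemma div2_bounds: "(real n - 1) / 2 \<le> real (n div 2)" "real (n div 2) \<le> real n / 2"
proof -
  have "n = 2 * (n div 2) + n mod 2" by simp
  hence e: "real n = 2 * real (n div 2) + real (n mod 2)" by (metis of_nat_add of_nat_mult of_nat_numeral)
  have "n mod 2 \<le> 1" by simp
  hence "real (n mod 2) \<le> 1" by simp
  thus "(real n - 1) / 2 \<le> real (n div 2)" "real (n div 2) \<le> real n / 2" using e by auto
qed

lemma lower_s: "n \<ge> 4 \<Longrightarrow> (real n - 1)/2 * ln ((real n - 1)/2) - real n / 2 \<le> ln (real (scount n 2))"
proof -
  assume n: "n \<ge> 4"
  define K where "K = n div 2"
  have K: "2 \<le> K" "2 * K \<le> n" using n unfolding K_def by auto
  have b: "(real n - 1) / 2 \<le> real K" "real K \<le> real n / 2" using div2_bounds unfolding K_def by auto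
  have h1: "1 \<le> (real n - 1) / 2" using n by simp
  have "(real n - 1)/2 * ln ((real n - 1)/2) \<le> real K * ln (real K)"
    using b h1 by (intro mult_mono) auto
  hence "(real n - 1)/2 * ln ((real n - 1)/2) - real n / 2 \<le> real K * ln (real K) - real K"
    using b by linarith
  also have "\<dots> \<le> ln (fact K)" using ln_fact_ge K by simp
  also have "\<dots> \<le> ln (real (scount n 2))"
  proof -
    have "fact K \<le> scount n 2" using scount_ge[OF K] .
    hence "(fact K :: real) \<le> real (scount n 2)" by (metis of_nat_fact of_nat_le_iff)
    moreover have "(0::real) < fact K" by simp
    ultimately have "(0::real) < real (scount n 2)" "(0::real) < fact K" "(fact K :: real) \<le> real (scount n 2)" by linarith+
    thus ?thesis using ln_le_cancel_iff by blast
  qed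
  finally show ?thesis .
qed

lemma upper_s: "n \<ge> 4 \<Longrightarrow> ln (real (scount n 2)) \<le> real n * ln 2 + real n / 2 * ln (real n)"
proof -
  assume n: "n \<ge> 4"
  have pos: "0 < real (scount n 2)"
  proof -
    have "fact 2 \<le> scount n 2" using scount_ge[of 2 n] n by simp
    thus ?thesis by simp
  qed
  have "real (scount n 2) \<le> real (2^n * n^(n div 2))" using scount_le[of n] n by (simp only: of_nat_le_iff)
  hence "ln (real (scount n 2)) \<le> ln (2^n * real n^(n div 2))" using pos by simp
  also have "\<dots> = real n * ln 2 + real (n div 2) * ln (real n)"
    using n by (simp add: ln_mult ln_realpow)
  also have "\<dots> \<le> real n * ln 2 + real n / 2 * ln (real n)"
    using div2_bounds(2)[of n] n by (intro add_left_mono mult_right_mono) auto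
  finally show ?thesis .
qed

lemma p_le_m: "pcount n 2 \<le> mcount n 2"
  unfolding pcount_def mcount_def by (intro card_mono pset_fin) auto

lemma lower_p: "2 \<le> k \<Longrightarrow> k \<le> n \<Longrightarrow> real (n - k) * ln (real k) \<le> ln (real (pcount n 2))"
proof -
  assume k: "2 \<le> k" "k \<le> n"
  have "k^(n-k) \<le> pcount n 2" using pcount_ge[OF k] .
  hence "real k ^ (n-k) \<le> real (pcount n 2)" by (metis of_nat_le_iff of_nat_power)
  moreover have "0 < real k ^ (n-k)" using k by simp
  ultimately have "0 < real (pcount n 2)" "0 < real k ^ (n-k)" "real k ^ (n-k) \<le> real (pcount n 2)" by linarith+
  hence "ln (real k ^ (n-k)) \<le> ln (real (pcount n 2))" using ln_le_cancel_iff by blast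
  thus ?thesis using k by (simp add: ln_realpow)
qed

lemma upper_m: "2 \<le> n \<Longrightarrow> ln (real (mcount n 2)) \<le> real n * ln (real n + 1)"
proof -
  assume n: "2 \<le> n"
  have "2^(n-2) \<le> pcount n 2" using pcount_ge[of 2 n] n by simp
  hence "0 < pcount n 2" by (metis le_zero_eq not_gr_zero power_not_zero zero_neq_numeral)
  hence pos: "0 < real (mcount n 2)" using p_le_m[of n] by simp
  have "real (mcount n 2) \<le> (real n + 1)^n" using mcount_le[of n] by (metis of_nat_Suc of_nat_le_iff of_nat_power Suc_eq_plus1 add.commute)
  hence "ln (real (mcount n 2)) \<le> ln ((real n + 1)^n)" using pos by simp
  also have "\<dots> = real n * ln (real n + 1)" by (simp add: ln_realpow)
  finally show ?thesis .
qed

lemma m_ge_p_ln: "2 \<le> n \<Longrightarrow> ln (real (pcount n 2)) \<le> ln (real (mcount n 2))"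
proof -
  assume n: "2 \<le> n"
  have "2^(n-2) \<le> pcount n 2" using pcount_ge[of 2 n] n by simp
  hence "0 < pcount n 2" by (metis le_zero_eq not_gr_zero power_not_zero zero_neq_numeral)
  thus ?thesis using p_le_m[of n] by simp
qed


definition kk :: "nat \<Rightarrow> nat" where "kk n = nat \<lfloor>real n / ln (real n)\<rfloor>"

lemma ev_k: "eventually (\<lambda>n. 2 \<le> kk n \<and> kk n \<le> n \<and>
   (real n - real n / ln (real n)) * ln (real n / ln (real n) - 1) \<le> real (n - kk n) * ln (real (kk n))) at_top"
proof -
  have e1: "eventually (\<lambda>n::nat. real n / ln (real n) \<ge> 3) at_top" by real_asymp
  have e2: "eventually (\<lambda>n::nat. real n / ln (real n) \<le> real n) at_top" by real_asymp
  show ?thesis using e1 e2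
  proof eventually_elim
    case (elim n)
    define x where "x = real n / ln (real n)"
    have x: "3 \<le> x" "x \<le> real n" using elim x_def by auto
    have fl: "real_of_int \<lfloor>x\<rfloor> \<le> x" "x - 1 < real_of_int \<lfloor>x\<rfloor>" by linarith+
    hence "0 \<le> \<lfloor>x\<rfloor>" using x by linarith
    hence rk: "real (kk n) = real_of_int \<lfloor>x\<rfloor>" unfolding kk_def x_def by simp
    have k1: "real (kk n) \<le> x" "x - 1 \<le> real (kk n)" using fl rk by linarith+
    have "2 \<le> real (kk n)" using k1 x by linarith
    hence k2: "2 \<le> kk n" by linarith
    have "real (kk n) \<le> real n" using k1 x by linarith
    hence k3: "kk n \<le> n" by linarith
    have "real (n - kk n) = real n - real (kk n)" using k3 by simp
    hence a1: "real n - x \<le> real (n - kk n)" using k1 by linarith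
    have a0: "0 \<le> real n - x" using x by linarith
    have b0: "0 \<le> ln (x - 1)" using x by simp
    have b1: "ln (x - 1) \<le> ln (real (kk n))" using k1 x by simp
    have "(real n - x) * ln (x - 1) \<le> real (n - kk n) * ln (real (kk n))"
      using a0 a1 b0 b1 by (intro mult_mono) auto
    thus ?case using k2 k3 x_def by simp
  qed
qed

lemma phi_pos: "eventually (\<lambda>n::nat. 0 < real n * ln (real n)) at_top"
  by real_asymp

lemma lim_s: "((\<lambda>n. ln (real (scount n 2)) / (real n * ln (real n))) \<longlongrightarrow> 1/2) at_top"
proof (rule tendsto_sandwich)
  have e4: "eventually (\<lambda>n::nat. n \<ge> 4) at_top" by (rule eventually_ge_at_top)
  show "eventually (\<lambda>n. ((real n - 1)/2 * ln ((real n - 1)/2) - real n / 2) / (real n * ln (real n))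
     \<le> ln (real (scount n 2)) / (real n * ln (real n))) at_top"
    using e4 phi_pos by eventually_elim (intro divide_right_mono lower_s, auto)
  show "eventually (\<lambda>n. ln (real (scount n 2)) / (real n * ln (real n)) \<le> (real n * ln 2 + real n / 2 * ln (real n)) / (real n * ln (real n))) at_top"
    using e4 phi_pos by eventually_elim (intro divide_right_mono upper_s, auto)
  show "((\<lambda>n::nat. ((real n - 1)/2 * ln ((real n - 1)/2) - real n / 2) / (real n * ln (real n))) \<longlongrightarrow> 1/2) at_top"
    by real_asymp
  show "((\<lambda>n::nat. (real n * ln 2 + real n / 2 * ln (real n)) / (real n * ln (real n))) \<longlongrightarrow> 1/2) at_top"
    by real_asymp
qed

lemma lim_low: "((\<lambda>n::nat. (real n - real n / ln (real n)) * ln (real n / ln (real n) - 1) / (real n * ln (real n))) \<longlongrightarrow> 1) at_top"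
  by real_asymp
lemma lim_up: "((\<lambda>n::nat. real n * ln (real n + 1) / (real n * ln (real n))) \<longlongrightarrow> 1) at_top"
  by real_asymp

lemma lim_p: "((\<lambda>n. ln (real (pcount n 2)) / (real n * ln (real n))) \<longlongrightarrow> 1) at_top"
proof (rule tendsto_sandwich[OF _ _ lim_low lim_up])
  have e2: "eventually (\<lambda>n::nat. n \<ge> 2) at_top" by (rule eventually_ge_at_top)
  show "eventually (\<lambda>n. (real n - real n / ln (real n)) * ln (real n / ln (real n) - 1) / (real n * ln (real n))
     \<le> ln (real (pcount n 2)) / (real n * ln (real n))) at_top"
    using ev_k phi_pos
  proof eventually_elim
    case (elim n)
    hence "(real n - real n / ln (real n)) * ln (real n / ln (real n) - 1) \<le> ln (real (pcount n 2))"
      using lower_p[of "kk n" n] by linarith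
    thus ?case using elim by (intro divide_right_mono) auto
  qed
  show "eventually (\<lambda>n. ln (real (pcount n 2)) / (real n * ln (real n)) \<le> real n * ln (real n + 1) / (real n * ln (real n))) at_top"
    using e2 phi_pos
  proof eventually_elim
    case (elim n)
    hence "ln (real (pcount n 2)) \<le> real n * ln (real n + 1)" using m_ge_p_ln upper_m by (meson order_trans)
    thus ?case using elim by (intro divide_right_mono) auto
  qed
qed

lemma lim_m: "((\<lambda>n. ln (real (mcount n 2)) / (real n * ln (real n))) \<longlongrightarrow> 1) at_top"
proof (rule tendsto_sandwich[OF _ _ lim_low lim_up])
  have e2: "eventually (\<lambda>n::nat. n \<ge> 2) at_top" by (rule eventually_ge_at_top)
  show "eventually (\<lambda>n. (real n - real n / ln (real n)) * ln (real n / ln (real n) - 1) / (real n * ln (real n))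
     \<le> ln (real (mcount n 2)) / (real n * ln (real n))) at_top"
    using ev_k phi_pos
  proof eventually_elim
    case (elim n)
    hence "(real n - real n / ln (real n)) * ln (real n / ln (real n) - 1) \<le> ln (real (mcount n 2))"
      using lower_p[of "kk n" n] m_ge_p_ln[of n] by linarith
    thus ?case using elim by (intro divide_right_mono) auto
  qed
  show "eventually (\<lambda>n. ln (real (mcount n 2)) / (real n * ln (real n)) \<le> real n * ln (real n + 1) / (real n * ln (real n))) at_top"
    using e2 phi_pos
  proof eventually_elim
    case (elim n)
    hence "ln (real (mcount n 2)) \<le> real n * ln (real n + 1)" using upper_m by blast
    thus ?case using elim by (intro divide_right_mono) auto
  qed
qed

lemma ratio1: "(c::real) \<noteq> 0 \<Longrightarrow> d \<noteq> 0 \<Longrightarrow> 2 * (a/c) / (b/c) = 2 * (a/d) / (b/d)"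
  by (cases "b = 0") (auto simp: field_simps)
lemma ratio2: "(c::real) \<noteq> 0 \<Longrightarrow> d \<noteq> 0 \<Longrightarrow> (a/c) / (b/c) = (a/d) / (b/d)"
  by (cases "b = 0") (auto simp: field_simps)

theorem theorem1p1:
  shows "((\<lambda>n. 2 * log 2 (real (scount n 2))) \<sim>[at_top] (\<lambda>n. log 2 (real (pcount n 2)))) \<and>
         ((\<lambda>n. log 2 (real (pcount n 2))) \<sim>[at_top] (\<lambda>n. log 2 (real (mcount n 2))))"
proof
  let ?phi = "\<lambda>n::nat. real n * ln (real n)"
  have l2: "ln (2::real) \<noteq> 0" by simp
  show "(\<lambda>n. 2 * log 2 (real (scount n 2))) \<sim>[at_top] (\<lambda>n. log 2 (real (pcount n 2)))"
  proof (rule asymp_equivI')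
    have "((\<lambda>n. 2 * (ln (real (scount n 2)) / ?phi n) / (ln (real (pcount n 2)) / ?phi n)) \<longlongrightarrow> 2 * (1/2) / 1) at_top"
      by (intro tendsto_intros lim_s lim_p) simp
    hence t: "((\<lambda>n. 2 * (ln (real (scount n 2)) / ?phi n) / (ln (real (pcount n 2)) / ?phi n)) \<longlongrightarrow> 1) at_top" by simp
    have "eventually (\<lambda>n. 2 * (ln (real (scount n 2)) / ?phi n) / (ln (real (pcount n 2)) / ?phi n)
        = 2 * log 2 (real (scount n 2)) / log 2 (real (pcount n 2))) at_top"
      using phi_pos by eventually_elim (unfold log_def, rule ratio1[OF _ l2], linarith)
    thus "((\<lambda>n. 2 * log 2 (real (scount n 2)) / log 2 (real (pcount n 2))) \<longlongrightarrow> 1) at_top"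
      using t by (rule Lim_transform_eventually[rotated])
  qed
  show "(\<lambda>n. log 2 (real (pcount n 2))) \<sim>[at_top] (\<lambda>n. log 2 (real (mcount n 2)))"
  proof (rule asymp_equivI')
    have "((\<lambda>n. (ln (real (pcount n 2)) / ?phi n) / (ln (real (mcount n 2)) / ?phi n)) \<longlongrightarrow> 1 / 1) at_top"
      by (intro tendsto_intros lim_m lim_p) simp
    hence t: "((\<lambda>n. (ln (real (pcount n 2)) / ?phi n) / (ln (real (mcount n 2)) / ?phi n)) \<longlongrightarrow> 1) at_top" by simp
    have "eventually (\<lambda>n. (ln (real (pcount n 2)) / ?phi n) / (ln (real (mcount n 2)) / ?phi n)
        = log 2 (real (pcount n 2)) / log 2 (real (mcount n 2))) at_top"
      using phi_pos by eventually_elim (unfold log_def, rule ratio2[OF _ l2], linarith)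
    thus "((\<lambda>n. log 2 (real (pcount n 2)) / log 2 (real (mcount n 2))) \<longlongrightarrow> 1) at_top"
      using t by (rule Lim_transform_eventually[rotated])
  qed
qed

end
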